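(* A function $\gamma:\mathbb{R}^d\times\mathcal{W}\to\mathbb{R}$ is $\mathcal{F}$-local covariogram admissible if and only if it is $\mathcal{M}$-local covariogram admissible.
   Context: $\mathcal{M}$: Lebesgue measurable subsets of $\mathbb{R}^d$; $\mathcal{F}$: closed subsets of $\mathbb{R}^d$. $\mathcal{W}$: bounded open $W$ with $\mathcal{L}^d(\partial W)=0$; $\delta_{y;W}(A)=\mathcal{L}^d(A\cap(y+A)\cap W)$. For $\mathcal{C}\in\{\mathcal{M},\mathcal{F}\}$, $\gamma$ is $\mathcal{C}$-local covariogram admissible if for all $q\ge1$, $a\in\mathbb{R}^q$, $y_i\in\mathbb{R}^d$, $W_i\in\mathcal{W}$, $c\in\mathbb{R}$: $[c+\sum_ia_i\delta_{y_i;W_i}(A)\ge0\ \forall A\in\mathcal{C}]\Rightarrow c+\sum_ia_i\gamma(y_i;W_i)\ge0$. *)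

theory Defs
  imports "HOL-Analysis.Analysis"
begin

definition Wclass :: "'a::euclidean_space set set" where
  "Wclass = {W. bounded W \<and> open W \<and> emeasure lebesgue (frontier W) = 0}"

definition local_cov :: "'a::euclidean_space \<Rightarrow> 'a set \<Rightarrow> 'a set \<Rightarrow> real" where
  "local_cov y W A = measure lebesgue (A \<inter> ((+) y ` A) \<inter> W)"

definition Mclass :: "'a::euclidean_space set set" where
  "Mclass = sets lebesgue"

definition Fclass :: "'a::euclidean_space set set" where
  "Fclass = {A. closed A}"

text \<open>C-local covariogram admissibility of gamma : R^d x W -> R
  (only the values at windows W in Wclass are ever used).\<close>
definition local_cov_admissible ::
  "'a::euclidean_space set set \<Rightarrow> ('a \<Rightarrow> 'a set \<Rightarrow> real) \<Rightarrow> bool" where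
  "local_cov_admissible C \<gamma> \<longleftrightarrow>
    (\<forall>q::nat. \<forall>a::nat \<Rightarrow> real. \<forall>y::nat \<Rightarrow> 'a. \<forall>W::nat \<Rightarrow> 'a set. \<forall>c::real.
       q \<ge> 1 \<longrightarrow> (\<forall>i<q. W i \<in> Wclass) \<longrightarrow>
       (\<forall>A\<in>C. c + (\<Sum>i<q. a i * local_cov (y i) (W i) A) \<ge> 0) \<longrightarrow>
       c + (\<Sum>i<q. a i * \<gamma> (y i) (W i)) \<ge> 0)"

end

theory Submission
  imports Defs
begin

lemma cov_approx:
  fixes A T W :: "'a::euclidean_space set"
  assumes A: "A \<in> sets lebesgue" and TA: "T \<subseteq> A" and cT: "closed T"
    and D: "A - T \<in> lmeasurable" and W: "W \<in> Wclass"
  shows "local_cov y W T \<le> local_cov y W A"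
    and "local_cov y W A \<le> local_cov y W T + 2 * measure lebesgue (A - T)"
proof -
  have bW: "bounded W" and oW: "open W" using W by (auto simp: Wclass_def)
  have WL: "W \<in> sets lebesgue" using oW by (simp add: borel_open)
  have TL: "T \<in> sets lebesgue" using cT by (simp add: borel_closed)
  define S1 where "S1 = A \<inter> ((+) y ` A) \<inter> W"
  define S0 where "S0 = T \<inter> ((+) y ` T) \<inter> W"
  have S1L: "S1 \<in> lmeasurable"
    unfolding S1_def
    by (rule bounded_set_imp_lmeasurable)
      (auto intro!: sets.Int A lebesgue_sets_translation WL bounded_subset[OF bW])
  have S0L: "S0 \<in> lmeasurable"
    unfolding S0_def
    by (rule bounded_set_imp_lmeasurable)
      (auto intro!: sets.Int TL lebesgue_sets_translation WL bounded_subset[OF bW])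
  have sub: "S0 \<subseteq> S1" using TA unfolding S0_def S1_def by auto
  show "local_cov y W T \<le> local_cov y W A"
    unfolding local_cov_def S0_def[symmetric] S1_def[symmetric]
    using measure_mono_fmeasurable[OF sub _ S1L] S0L by auto
  have "S1 - S0 \<subseteq> (A - T) \<union> ((+) y ` (A - T))"
    unfolding S0_def S1_def by auto
  have DL: "(+) y ` (A - T) \<in> lmeasurable" using D by (rule measurable_translation)
  have "measure lebesgue (S1 - S0) \<le> measure lebesgue ((A - T) \<union> ((+) y ` (A - T)))"
    by (rule measure_mono_fmeasurable[OF \<open>S1 - S0 \<subseteq> _\<close>])
      (use S1L S0L D DL in auto)
  also have "\<dots> \<le> measure lebesgue (A - T) + measure lebesgue ((+) y ` (A - T))"
    by (rule measure_Un_le) (use D DL in auto)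
  also have "\<dots> = 2 * measure lebesgue (A - T)" by (simp add: measure_translation)
  finally have "measure lebesgue (S1 - S0) \<le> 2 * measure lebesgue (A - T)" .
  moreover have "measure lebesgue (S1 - S0) = measure lebesgue S1 - measure lebesgue S0"
    by (rule measure_Diff) (use S1L S0L sub in \<open>auto simp: fmeasurable_def\<close>)
  ultimately show "local_cov y W A \<le> local_cov y W T + 2 * measure lebesgue (A - T)"
    unfolding local_cov_def S0_def[symmetric] S1_def[symmetric] by linarith
qed

lemma closed_approx:
  fixes A :: "'a::euclidean_space set"
  assumes A: "A \<in> sets lebesgue" and e: "e > 0"
  obtains T where "closed T" "T \<subseteq> A" "A - T \<in> lmeasurable" "measure lebesgue (A - T) < e"
proof -
  obtain T where T: "closed T" "T \<subseteq> A" "A - T \<in> lmeasurable" "emeasure lebesgue (A - T) < ennreal e"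
    using sets_lebesgue_inner_closed[OF A e] by blast
  have "measure lebesgue (A - T) < e"
    using T(3,4) e by (simp add: emeasure_eq_measure2 ennreal_less_iff)
  then show ?thesis using T that by blast
qed

theorem proposition4p11:
  fixes \<gamma> :: "'a::euclidean_space \<Rightarrow> 'a set \<Rightarrow> real"
  shows "local_cov_admissible Fclass \<gamma> \<longleftrightarrow> local_cov_admissible Mclass \<gamma>"
proof
  assume F: "local_cov_admissible Fclass \<gamma>"
  have FM: "Fclass \<subseteq> (Mclass :: 'a set set)"
    by (auto simp: Fclass_def Mclass_def borel_closed)
  show "local_cov_admissible Mclass \<gamma>"
    unfolding local_cov_admissible_def
  proof (intro allI impI)
    fix q :: nat and a :: "nat \<Rightarrow> real" and y :: "nat \<Rightarrow> 'a" and W :: "nat \<Rightarrow> 'a set" and c :: real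
    assume "1 \<le> q" "\<forall>i<q. W i \<in> Wclass"
      "\<forall>A\<in>Mclass. 0 \<le> c + (\<Sum>i<q. a i * local_cov (y i) (W i) A)"
    hence "\<forall>A\<in>Fclass. 0 \<le> c + (\<Sum>i<q. a i * local_cov (y i) (W i) A)"
      using FM by blast
    then show "0 \<le> c + (\<Sum>i<q. a i * \<gamma> (y i) (W i))"
      using F \<open>1 \<le> q\<close> \<open>\<forall>i<q. W i \<in> Wclass\<close> unfolding local_cov_admissible_def by blast
  qed
next
  assume M: "local_cov_admissible Mclass \<gamma>"
  show "local_cov_admissible Fclass \<gamma>"
    unfolding local_cov_admissible_def
  proof (intro allI impI)
    fix q :: nat and a :: "nat \<Rightarrow> real" and y :: "nat \<Rightarrow> 'a" and W :: "nat \<Rightarrow> 'a set" and c :: real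
    assume q: "1 \<le> q" and Wq: "\<forall>i<q. W i \<in> Wclass"
      and H: "\<forall>A\<in>Fclass. 0 \<le> c + (\<Sum>i<q. a i * local_cov (y i) (W i) A)"
    have "\<forall>A\<in>Mclass. 0 \<le> c + (\<Sum>i<q. a i * local_cov (y i) (W i) A)"
    proof
      fix A :: "'a set" assume "A \<in> Mclass"
      hence A: "A \<in> sets lebesgue" by (simp add: Mclass_def)
      define K where "K = (\<Sum>i<q. \<bar>a i\<bar>)"
      have K0: "K \<ge> 0" unfolding K_def by (simp add: sum_nonneg)
      show "0 \<le> c + (\<Sum>i<q. a i * local_cov (y i) (W i) A)"
      proof (rule field_le_epsilon)
        fix e :: real assume e: "0 < e"
        obtain T where T: "closed T" "T \<subseteq> A" "A - T \<in> lmeasurable"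
          "measure lebesgue (A - T) < e / (2 * (K + 1))"
          using closed_approx[OF A, of "e / (2 * (K + 1))"] e K0 by auto
        define m where "m = measure lebesgue (A - T)"
        have m0: "m \<ge> 0" unfolding m_def by simp
        have diff: "\<bar>local_cov (y i) (W i) A - local_cov (y i) (W i) T\<bar> \<le> 2 * m" if "i < q" for i
          using cov_approx[OF A T(2,1,3), of "W i" "y i"] Wq that unfolding m_def by auto
        have "\<bar>(\<Sum>i<q. a i * local_cov (y i) (W i) A) - (\<Sum>i<q. a i * local_cov (y i) (W i) T)\<bar>
              = \<bar>\<Sum>i<q. a i * (local_cov (y i) (W i) A - local_cov (y i) (W i) T)\<bar>"
          by (simp add: sum_subtractf right_diff_distrib)
        also have "\<dots> \<le> (\<Sum>i<q. \<bar>a i * (local_cov (y i) (W i) A - local_cov (y i) (W i) T)\<bar>)"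
          by (rule sum_abs)
        also have "\<dots> \<le> (\<Sum>i<q. \<bar>a i\<bar> * (2 * m))"
          by (rule sum_mono) (auto simp: abs_mult intro!: mult_left_mono diff)
        also have "\<dots> = K * (2 * m)" by (simp add: K_def sum_distrib_right)
        also have "\<dots> \<le> e"
        proof -
          have pos: "2 * (K + 1) > 0" using K0 by simp
          have "m < e / (2 * (K + 1))" using T(4) unfolding m_def .
          hence "m * (2 * (K + 1)) < e" using pos by (simp add: less_divide_eq)
          moreover have "m * (2 * (K + 1)) = K * (2 * m) + 2 * m" by (simp add: algebra_simps)
          ultimately show ?thesis using m0 by linarith
        qed
        finally have "\<bar>(\<Sum>i<q. a i * local_cov (y i) (W i) A) - (\<Sum>i<q. a i * local_cov (y i) (W i) T)\<bar> \<le> e" .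
        moreover have "0 \<le> c + (\<Sum>i<q. a i * local_cov (y i) (W i) T)"
          using H T(1) by (simp add: Fclass_def)
        ultimately show "0 \<le> c + (\<Sum>i<q. a i * local_cov (y i) (W i) A) + e" by linarith
      qed
    qed
    then show "0 \<le> c + (\<Sum>i<q. a i * \<gamma> (y i) (W i))"
      using M q Wq unfolding local_cov_admissible_def by blast
  qed
qed

end
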